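(* Let $\alpha,\beta\in\mathbb{R}$ with $\alpha\neq 0$, and let $G_1$ be the connected, simply connected Lie group whose Lie algebra $\mathfrak{g}_1$ has a basis $\{e_1,e_2,e_3\}$ with $[e_1,e_2]=\alpha e_1-\beta e_3$, $[e_1,e_3]=-\alpha e_1-\beta e_2$, $[e_2,e_3]=\beta e_1+\alpha e_2+\alpha e_3$, equipped with the left-invariant Lorentzian metric $g$ for which $\{e_1,e_2,e_3\}$ is pseudo-orthonormal with $e_3$ timelike. Let $\lambda_0, c\in\mathbb{R}$. Then there exists a derivation $D$ of $\mathfrak{g}_1$ with $\mathrm{Ric}=(s\lambda_0+c)\mathrm{Id}+D$ (i.e. $(G_1,g)$ is an algebraic Schouten soliton associated to the Levi-Civita connection) if and only if $\beta=0$ and $c=0$.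
   Context: Pseudo-orthonormal means $g(e_1,e_1)=g(e_2,e_2)=1$, $g(e_3,e_3)=-1$, $g(e_i,e_j)=0$ for $i\neq j$; left-invariant tensors are identified with their values on $\mathfrak{g}$. $\nabla$ is the Levi-Civita connection of $g$, with curvature $R(X,Y)Z=\nabla_X\nabla_YZ-\nabla_Y\nabla_XZ-\nabla_{[X,Y]}Z$. The Ricci tensor is $\rho(X,Y)=-g(R(X,e_1)Y,e_1)-g(R(X,e_2)Y,e_2)+g(R(X,e_3)Y,e_3)$, the Ricci operator $\mathrm{Ric}$ is defined by $\rho(X,Y)=g(\mathrm{Ric}(X),Y)$, and the scalar curvature is $s=\rho(e_1,e_1)+\rho(e_2,e_2)-\rho(e_3,e_3)$. A derivation of $\mathfrak{g}$ is a linear map $D:\mathfrak{g}\to\mathfrak{g}$ with $D[X,Y]=[DX,Y]+[X,DY]$ for all $X,Y\in\mathfrak{g}$. $(G,g)$ is called an algebraic Schouten soliton associated to $\nabla$ (with real constants $\lambda_0$, $c$) if $\mathrm{Ric}=(s\lambda_0+c)\mathrm{Id}+D$ for some derivation $D$. *)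

theory Defs
  imports "HOL-Analysis.Analysis"
begin

text \<open>The Lie algebra g1 is modelled as real^3 with basis e 1, e 2, e 3 (standard axes).\<close>

definition e :: "3 \<Rightarrow> real^3" where
  "e i = axis i 1"

definition lor :: "real^3 \<Rightarrow> real^3 \<Rightarrow> real" where
  "lor x y = x$1 * y$1 + x$2 * y$2 - x$3 * y$3"

definition br :: "real \<Rightarrow> real \<Rightarrow> real^3 \<Rightarrow> real^3 \<Rightarrow> real^3" where
  "br a b x y =
      (x$1 * y$2 - x$2 * y$1) *\<^sub>R (a *\<^sub>R e 1 - b *\<^sub>R e 3)
    + (x$1 * y$3 - x$3 * y$1) *\<^sub>R (- a *\<^sub>R e 1 - b *\<^sub>R e 2)
    + (x$2 * y$3 - x$3 * y$2) *\<^sub>R (b *\<^sub>R e 1 + a *\<^sub>R e 2 + a *\<^sub>R e 3)"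

text \<open>Levi-Civita connection on left-invariant fields: the unique torsion-free
  metric connection (for left-invariant X,Y,Z, X(g(Y,Z)) = 0).\<close>
definition levi_civita :: "real \<Rightarrow> real \<Rightarrow> real^3 \<Rightarrow> real^3 \<Rightarrow> real^3" where
  "levi_civita a b = (THE N. (\<forall>X Y. N X Y - N Y X = br a b X Y) \<and>
                           (\<forall>X Y Z. lor (N X Y) Z + lor Y (N X Z) = 0))"

definition curv :: "real \<Rightarrow> real \<Rightarrow> real^3 \<Rightarrow> real^3 \<Rightarrow> real^3 \<Rightarrow> real^3" where
  "curv a b X Y Z = (let N = levi_civita a b in
      N X (N Y Z) - N Y (N X Z) - N (br a b X Y) Z)"

definition ricci :: "real \<Rightarrow> real \<Rightarrow> real^3 \<Rightarrow> real^3 \<Rightarrow> real" where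
  "ricci a b X Y = - lor (curv a b X (e 1) Y) (e 1) - lor (curv a b X (e 2) Y) (e 2)
                   + lor (curv a b X (e 3) Y) (e 3)"

definition ricci_op :: "real \<Rightarrow> real \<Rightarrow> real^3 \<Rightarrow> real^3" where
  "ricci_op a b X = (THE v. \<forall>Y. lor v Y = ricci a b X Y)"

definition scal :: "real \<Rightarrow> real \<Rightarrow> real" where
  "scal a b = ricci a b (e 1) (e 1) + ricci a b (e 2) (e 2) - ricci a b (e 3) (e 3)"

definition is_derivation :: "real \<Rightarrow> real \<Rightarrow> (real^3 \<Rightarrow> real^3) \<Rightarrow> bool" where
  "is_derivation a b D \<longleftrightarrow> linear D \<and>
     (\<forall>X Y. D (br a b X Y) = br a b (D X) Y + br a b X (D Y))"

end

theory Submission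
  imports Defs
begin

lemma e_comp [simp]:
  "e 1 $ 1 = 1" "e 1 $ 2 = 0" "e 1 $ 3 = 0"
  "e 2 $ 1 = 0" "e 2 $ 2 = 1" "e 2 $ 3 = 0"
  "e 3 $ 1 = 0" "e 3 $ 2 = 0" "e 3 $ 3 = 1"
  by (simp_all add: e_def axis_def)

lemma br_comp [simp]:
  "br a b x y $ 1 = a*(x$1*y$2 - x$2*y$1) - a*(x$1*y$3 - x$3*y$1) + b*(x$2*y$3 - x$3*y$2)"
  "br a b x y $ 2 = - b*(x$1*y$3 - x$3*y$1) + a*(x$2*y$3 - x$3*y$2)"
  "br a b x y $ 3 = - b*(x$1*y$2 - x$2*y$1) + a*(x$2*y$3 - x$3*y$2)"
  by (simp_all add: br_def algebra_simps)

definition NE :: "real \<Rightarrow> real \<Rightarrow> real^3 \<Rightarrow> real^3 \<Rightarrow> real^3" where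
"NE a b X Y = vector [ a*X$1*Y$2 - a*X$1*Y$3 + b/2*X$2*Y$3 - b/2*X$3*Y$2,
 -a*X$1*Y$1 - b/2*X$1*Y$3 + a*X$2*Y$3 + b/2*X$3*Y$1 - a*X$3*Y$3,
 -a*X$1*Y$1 - b/2*X$1*Y$2 + b/2*X$2*Y$1 + a*X$2*Y$2 - a*X$3*Y$2]"

lemma NE_comp [simp]:
  "NE a b X Y $ 1 = a*X$1*Y$2 - a*X$1*Y$3 + b/2*X$2*Y$3 - b/2*X$3*Y$2"
  "NE a b X Y $ 2 = -a*X$1*Y$1 - b/2*X$1*Y$3 + a*X$2*Y$3 + b/2*X$3*Y$1 - a*X$3*Y$3"
  "NE a b X Y $ 3 = -a*X$1*Y$1 - b/2*X$1*Y$2 + b/2*X$2*Y$1 + a*X$2*Y$2 - a*X$3*Y$2"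
  by (simp_all add: NE_def)

lemma lor_ext:
  assumes "\<And>Z. lor u Z = lor v Z" shows "u = v"
proof -
  have "u$1 = v$1" using assms[of "e 1"] by (simp add: lor_def)
  moreover have "u$2 = v$2" using assms[of "e 2"] by (simp add: lor_def)
  moreover have "u$3 = v$3" using assms[of "e 3"] by (simp add: lor_def)
  ultimately show ?thesis by (simp add: vec_eq_iff forall_3)
qed

lemma lor_diff: "lor (u - v) w = lor u w - lor v w"
  by (simp add: lor_def algebra_simps)

lemma lor_sym: "lor u v = lor v u"
  by (simp add: lor_def algebra_simps)

lemma koszul:
  assumes T: "\<forall>X Y. N X Y - N Y X = br a b X Y"
    and M: "\<forall>X Y Z. lor (N X Y) Z + lor Y (N X Z) = 0"
  shows "lor (N X Y) Z = (lor (br a b X Y) Z - lor (br a b Y Z) X + lor (br a b Z X) Y) / 2"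
proof -
  have t1: "lor (br a b X Y) Z = lor (N X Y) Z - lor (N Y X) Z" using T lor_diff by metis
  have t2: "lor (br a b Y Z) X = lor (N Y Z) X - lor (N Z Y) X" using T lor_diff by metis
  have t3: "lor (br a b Z X) Y = lor (N Z X) Y - lor (N X Z) Y" using T lor_diff by metis
  have m1: "lor (N X Y) Z + lor (N X Z) Y = 0" using M lor_sym by metis
  have m2: "lor (N Y X) Z + lor (N Y Z) X = 0" using M lor_sym by metis
  have m3: "lor (N Z X) Y + lor (N Z Y) X = 0" using M lor_sym by metis
  show ?thesis unfolding t1 t2 t3 using m1 m2 m3 by (simp add: field_simps)
qed

lemma NE_torsion: "NE a b X Y - NE a b Y X = br a b X Y"
  by (simp add: vec_eq_iff forall_3 algebra_simps)

lemma NE_metric: "lor (NE a b X Y) Z + lor Y (NE a b X Z) = 0"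
  by (simp add: lor_def algebra_simps)

lemma LC: "levi_civita a b = NE a b"
  unfolding levi_civita_def
proof (rule the_equality)
  show "(\<forall>X Y. NE a b X Y - NE a b Y X = br a b X Y) \<and>
    (\<forall>X Y Z. lor (NE a b X Y) Z + lor Y (NE a b X Z) = 0)"
    using NE_torsion NE_metric by blast
next
  fix N assume H: "(\<forall>X Y. N X Y - N Y X = br a b X Y) \<and>
    (\<forall>X Y Z. lor (N X Y) Z + lor Y (N X Z) = 0)"
  show "N = NE a b"
  proof (intro ext lor_ext)
    fix X Y Z
    show "lor (N X Y) Z = lor (NE a b X Y) Z"
      using koszul[of N a b X Y Z] koszul[of "NE a b" a b X Y Z] H NE_torsion NE_metric
      by simp
  qed
qed

definition RE :: "real \<Rightarrow> real \<Rightarrow> real^3 \<Rightarrow> real^3" where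
"RE a b X = vector [ -(b*b)/2*X$1 - a*b*X$2 + a*b*X$3,
  -a*b*X$1 + (-(b*b)/2 - 2*(a*a))*X$2 + 2*(a*a)*X$3,
  -a*b*X$1 - 2*(a*a)*X$2 + (2*(a*a) - (b*b)/2)*X$3]"

lemma RE_comp [simp]:
  "RE a b X $ 1 = -(b*b)/2*X$1 - a*b*X$2 + a*b*X$3"
  "RE a b X $ 2 = -a*b*X$1 + (-(b*b)/2 - 2*(a*a))*X$2 + 2*(a*a)*X$3"
  "RE a b X $ 3 = -a*b*X$1 - 2*(a*a)*X$2 + (2*(a*a) - (b*b)/2)*X$3"
  by (simp_all add: RE_def)

lemma ricci_eq: "ricci a b X Y = lor (RE a b X) Y"
  unfolding ricci_def curv_def Let_def LC
  by (simp add: lor_def algebra_simps power2_eq_square)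

lemma ricci_op_eq: "ricci_op a b X = RE a b X"
  unfolding ricci_op_def
  by (rule the_equality) (auto simp: ricci_eq intro: lor_ext)

lemma scal_eq: "scal a b = - 3/2 * (b*b)"
  unfolding scal_def ricci_eq by (simp add: lor_def algebra_simps power2_eq_square)


theorem theorem3p2:
  fixes a b lambda0 c :: real
  assumes "a \<noteq> 0"
  shows "(\<exists>D. is_derivation a b D \<and>
            (\<forall>X. ricci_op a b X = (scal a b * lambda0 + c) *\<^sub>R X + D X))
         \<longleftrightarrow> (b = 0 \<and> c = 0)"
proof
  assume "\<exists>D. is_derivation a b D \<and>
            (\<forall>X. ricci_op a b X = (scal a b * lambda0 + c) *\<^sub>R X + D X)"
  then obtain D where der: "is_derivation a b D"
    and R: "\<And>X. ricci_op a b X = (scal a b * lambda0 + c) *\<^sub>R X + D X" by blast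
  define k where "k = scal a b * lambda0 + c"
  have DX: "\<And>X. D X = RE a b X - k *\<^sub>R X"
    using R unfolding k_def ricci_op_eq by (metis add_diff_cancel_left')
  have H: "D (br a b (e 1) (e 2)) = br a b (D (e 1)) (e 2) + br a b (e 1) (D (e 2))"
    using der unfolding is_derivation_def by blast
  have H2: "(D (br a b (e 1) (e 2))) $ 2 = (br a b (D (e 1)) (e 2) + br a b (e 1) (D (e 2))) $ 2"
    using H by simp
  have "- 6 * (a*a) * b = 0" using H2 unfolding DX by (simp add: algebra_simps)
  then have b0: "b = 0" using assms by simp
  have H1: "(D (br a b (e 1) (e 2))) $ 1 = (br a b (D (e 1)) (e 2) + br a b (e 1) (D (e 2))) $ 1"
    using H by simp
  have "a * c = 0" using H1 unfolding DX k_def scal_eq b0 by (simp add: algebra_simps)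
  then have "c = 0" using assms by simp
  with b0 show "b = 0 \<and> c = 0" by simp
next
  assume bc: "b = 0 \<and> c = 0"
  show "\<exists>D. is_derivation a b D \<and>
            (\<forall>X. ricci_op a b X = (scal a b * lambda0 + c) *\<^sub>R X + D X)"
  proof (intro exI conjI allI)
    show "is_derivation a b (RE a b)"
      unfolding is_derivation_def
    proof (intro conjI allI)
      show "linear (RE a b)"
        by (rule linearI) (simp_all add: vec_eq_iff forall_3 algebra_simps)
      fix X Y
      show "RE a b (br a b X Y) = br a b (RE a b X) Y + br a b X (RE a b Y)"
        using bc by (simp add: vec_eq_iff forall_3 algebra_simps)
    qed
    fix X
    show "ricci_op a b X = (scal a b * lambda0 + c) *\<^sub>R X + RE a b X"
      using bc by (simp add: ricci_op_eq scal_eq)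
  qed
qed

end
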